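(* For every nonempty $V_1\subseteq V$, $$\min_{\mathcal{S}:\ s\in\mathcal{S},\ t\notin\mathcal{S},\ \mathcal{S}\cap V=V_1} c(\mathcal{S},V_\mathcal{H}\setminus\mathcal{S})\;=\;|V_\psi|\Big[\mu_\psi(G)+\big(\rho_\psi^*-\rho_\psi(V_1)\big)|V_1|\Big].$$ Moreover, the minimum is attained by a set $\mathcal{S}$ whose intersection with $\Lambda'$ is the set of all groups in $\Lambda'$ whose common node set is contained in $V_1$.
   Context: Let $G=(V,E)$ be a finite simple undirected graph and $\psi=(V_\psi,E_\psi)$ a pattern graph (a finite graph). A $\psi$-instance in $G$ is a subgraph of $G$ (node set and edge set) isomorphic to $\psi$. For $W\subseteq V$, $\mu_\psi(G[W])$ is the number of $\psi$-instances all of whose nodes lie in $W$, $\mu_\psi(G)=\mu_\psi(G[V])$, and for nonempty $W$, $\rho_\psi(W)=\mu_\psi(G[W])/|W|$; $\rho_\psi^*=\max_{\emptyset\ne W\subseteq V}\rho_\psi(W)$. $deg_G(v,\psi)$ is the number of $\psi$-instances containing $v$. $\Lambda'$ is the partition of the set of all $\psi$-instances of $G$ into groups $g$ of instances having the same node set, denoted $\lambda_g$. The flow network $\mathcal{H}=(V_\mathcal{H},E_\mathcal{H},c)$ has $V_\mathcal{H}=V\cup\{\lambda_g:g\in\Lambda'\}\cup\{s,t\}$ (one new node per group) and arcs: for each $v\in V$, $(s,v)$ of capacity $deg_G(v,\psi)$, $(v,t)$ of capacity $|V_\psi|\rho_\psi^*$, $(v,s),(t,v)$ of capacity $0$; for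 each group $g$ and each $v\in\lambda_g$, $(\lambda_g,v)$ of capacity $|g|(|V_\psi|-1)$ and $(v,\lambda_g)$ of capacity $|g|$; no other arcs. For $s\in\mathcal{S}$, $t\notin\mathcal{S}$, $c(\mathcal{S},V_\mathcal{H}\setminus\mathcal{S})$ is the total capacity of arcs from $\mathcal{S}$ to its complement. *)

theory Defs
  imports Complex_Main
begin

definition simple_graph :: "'a set \<Rightarrow> 'a set set \<Rightarrow> bool" where
  "simple_graph V E \<longleftrightarrow> finite V \<and> (\<forall>e\<in>E. e \<subseteq> V \<and> card e = 2)"

definition instances ::
  "'a set \<Rightarrow> 'a set set \<Rightarrow> 'b set \<Rightarrow> 'b set set \<Rightarrow> ('a set \<times> 'a set set) set" where
  "instances V E Vp Ep = {(S, F). S \<subseteq> V \<and> F \<subseteq> E \<and> (\<forall>e\<in>F. e \<subseteq> S) \<and>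
      (\<exists>f. bij_betw f Vp S \<and> F = (image f) ` Ep)}"

definition mu :: "'a set \<Rightarrow> 'a set set \<Rightarrow> 'b set \<Rightarrow> 'b set set \<Rightarrow> 'a set \<Rightarrow> nat" where
  "mu V E Vp Ep W = card {I \<in> instances V E Vp Ep. fst I \<subseteq> W}"

definition rho :: "'a set \<Rightarrow> 'a set set \<Rightarrow> 'b set \<Rightarrow> 'b set set \<Rightarrow> 'a set \<Rightarrow> real" where
  "rho V E Vp Ep W = real (mu V E Vp Ep W) / real (card W)"

definition rho_star :: "'a set \<Rightarrow> 'a set set \<Rightarrow> 'b set \<Rightarrow> 'b set set \<Rightarrow> real" where
  "rho_star V E Vp Ep = Max {rho V E Vp Ep W | W. W \<noteq> {} \<and> W \<subseteq> V}"

definition pdeg :: "'a set \<Rightarrow> 'a set set \<Rightarrow> 'b set \<Rightarrow> 'b set set \<Rightarrow> 'a \<Rightarrow> nat" where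
  "pdeg V E Vp Ep v = card {I \<in> instances V E Vp Ep. v \<in> fst I}"

text \<open>Groups of Lambda': instances with the same node set. A group g is identified by its
  common node set lambda_g (distinct groups have distinct node sets).\<close>
definition group_sets :: "'a set \<Rightarrow> 'a set set \<Rightarrow> 'b set \<Rightarrow> 'b set set \<Rightarrow> 'a set set" where
  "group_sets V E Vp Ep = fst ` instances V E Vp Ep"

definition group_size :: "'a set \<Rightarrow> 'a set set \<Rightarrow> 'b set \<Rightarrow> 'b set set \<Rightarrow> 'a set \<Rightarrow> nat" where
  "group_size V E Vp Ep X = card {I \<in> instances V E Vp Ep. fst I = X}"

datatype 'a hnode = Src | Snk | Vx 'a | Grp "'a set"

definition hnodes :: "'a set \<Rightarrow> 'a set set \<Rightarrow> 'b set \<Rightarrow> 'b set set \<Rightarrow> 'a hnode set" where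
  "hnodes V E Vp Ep = {Src, Snk} \<union> Vx ` V \<union> Grp ` group_sets V E Vp Ep"

text \<open>Capacity function of H (0 on non-arcs, which does not affect cut values).\<close>
fun cap :: "'a set \<Rightarrow> 'a set set \<Rightarrow> 'b set \<Rightarrow> 'b set set \<Rightarrow> 'a hnode \<Rightarrow> 'a hnode \<Rightarrow> real" where
  "cap V E Vp Ep Src (Vx v) = (if v \<in> V then real (pdeg V E Vp Ep v) else 0)"
| "cap V E Vp Ep (Vx v) Snk =
     (if v \<in> V then real (card Vp) * rho_star V E Vp Ep else 0)"
| "cap V E Vp Ep (Grp X) (Vx v) =
     (if X \<in> group_sets V E Vp Ep \<and> v \<in> X
      then real (group_size V E Vp Ep X) * (real (card Vp) - 1) else 0)"
| "cap V E Vp Ep (Vx v) (Grp X) =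
     (if X \<in> group_sets V E Vp Ep \<and> v \<in> X
      then real (group_size V E Vp Ep X) else 0)"
| "cap V E Vp Ep _ _ = 0"

definition cut_cap :: "'a set \<Rightarrow> 'a set set \<Rightarrow> 'b set \<Rightarrow> 'b set set \<Rightarrow> 'a hnode set \<Rightarrow> real" where
  "cut_cap V E Vp Ep S =
     (\<Sum>x\<in>S. \<Sum>y\<in>hnodes V E Vp Ep - S. cap V E Vp Ep x y)"

definition adm_cut :: "'a set \<Rightarrow> 'a set set \<Rightarrow> 'b set \<Rightarrow> 'b set set \<Rightarrow> 'a set \<Rightarrow> 'a hnode set \<Rightarrow> bool" where
  "adm_cut V E Vp Ep V1 S \<longleftrightarrow> S \<subseteq> hnodes V E Vp Ep \<and> Src \<in> S \<and> Snk \<notin> S \<and>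
     {v \<in> V. Vx v \<in> S} = V1"

end

theory Submission
  imports Defs
begin

lemma inst_props:
  assumes "I \<in> instances V E Vp Ep"
  shows "fst I \<subseteq> V \<and> card (fst I) = card Vp"
  using assms unfolding instances_def
  by (auto dest: bij_betw_same_card)

lemma inst_finite:
  assumes "simple_graph V E"
  shows "finite (instances V E Vp Ep)"
proof -
  have fV: "finite V" using assms by (simp add: simple_graph_def)
  have "E \<subseteq> Pow V" using assms by (auto simp: simple_graph_def)
  hence fE: "finite E" using fV by (meson finite_Pow_iff finite_subset)
  have "instances V E Vp Ep \<subseteq> Pow V \<times> Pow E" unfolding instances_def by auto
  thus ?thesis using fV fE by (meson finite_Pow_iff finite_SigmaI finite_subset)
qed

lemma sum_decomp:
  assumes "finite A" "finite B" "n = Src \<or> n = Snk"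
  fixes f :: "'a hnode \<Rightarrow> real"
  shows "sum f (insert n (Vx ` A \<union> Grp ` B)) = f n + sum (\<lambda>v. f (Vx v)) A + sum (\<lambda>X. f (Grp X)) B"
proof -
  have "n \<notin> Vx ` A \<union> Grp ` B" using assms(3) by auto
  hence "sum f (insert n (Vx ` A \<union> Grp ` B)) = f n + sum f (Vx ` A \<union> Grp ` B)"
    using assms by (simp add: sum.insert)
  also have "sum f (Vx ` A \<union> Grp ` B) = sum f (Vx ` A) + sum f (Grp ` B)"
    using assms by (intro sum.union_disjoint) auto
  also have "sum f (Vx ` A) = sum (\<lambda>v. f (Vx v)) A"
    by (subst sum.reindex) (auto simp: inj_on_def)
  also have "sum f (Grp ` B) = sum (\<lambda>X. f (Grp X)) B"
    by (subst sum.reindex) (auto simp: inj_on_def)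
  finally show ?thesis by (simp add: add.assoc)
qed

lemma cut_formula:
  assumes fV: "finite V" and AV: "A \<subseteq> V" and fG: "finite (group_sets V E Vp Ep)"
    and BG: "B \<subseteq> group_sets V E Vp Ep"
    and S: "S = insert Src (Vx ` A \<union> Grp ` B)"
  shows "cut_cap V E Vp Ep S =
     (\<Sum>v\<in>V - A. real (pdeg V E Vp Ep v))
     + real (card A) * (real (card Vp) * rho_star V E Vp Ep)
     + (\<Sum>v\<in>A. \<Sum>X\<in>group_sets V E Vp Ep - B. if v \<in> X then real (group_size V E Vp Ep X) else 0)
     + (\<Sum>X\<in>B. \<Sum>w\<in>V - A. if w \<in> X then real (group_size V E Vp Ep X) * (real (card Vp) - 1) else 0)"
proof -
  let ?G = "group_sets V E Vp Ep"
  let ?c = "cap V E Vp Ep"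
  have fA: "finite A" using fV AV finite_subset by blast
  have fB: "finite B" using fG BG finite_subset by blast
  have T: "hnodes V E Vp Ep - S = insert Snk (Vx ` (V - A) \<union> Grp ` (?G - B))"
    using AV BG unfolding S hnodes_def by auto
  have inner: "(\<Sum>y\<in>hnodes V E Vp Ep - S. ?c x y) =
      ?c x Snk + (\<Sum>v\<in>V - A. ?c x (Vx v)) + (\<Sum>X\<in>?G - B. ?c x (Grp X))" for x
    unfolding T by (rule sum_decomp) (use fV fG in auto)
  have "cut_cap V E Vp Ep S = (\<Sum>x\<in>S. ?c x Snk + (\<Sum>v\<in>V - A. ?c x (Vx v)) + (\<Sum>X\<in>?G - B. ?c x (Grp X)))"
    unfolding cut_cap_def inner ..
  also have "\<dots> = (\<Sum>v\<in>V - A. real (pdeg V E Vp Ep v))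
     + (\<Sum>v\<in>A. real (card Vp) * rho_star V E Vp Ep
          + (\<Sum>X\<in>?G - B. if v \<in> X then real (group_size V E Vp Ep X) else 0))
     + (\<Sum>X\<in>B. \<Sum>w\<in>V - A. if w \<in> X then real (group_size V E Vp Ep X) * (real (card Vp) - 1) else 0)"
  proof -
    let ?g = "\<lambda>x. ?c x Snk + (\<Sum>v\<in>V - A. ?c x (Vx v)) + (\<Sum>X\<in>?G - B. ?c x (Grp X))"
    have D: "sum ?g (insert Src (Vx ` A \<union> Grp ` B)) = ?g Src + (\<Sum>v\<in>A. ?g (Vx v)) + (\<Sum>X\<in>B. ?g (Grp X))"
      by (rule sum_decomp[OF fA fB]) simp
    have 1: "?g Src = (\<Sum>v\<in>V - A. real (pdeg V E Vp Ep v))"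
      by (auto intro!: sum.cong)
    have 2: "(\<Sum>v\<in>A. ?g (Vx v))
      = (\<Sum>v\<in>A. real (card Vp) * rho_star V E Vp Ep
          + (\<Sum>X\<in>?G - B. if v \<in> X then real (group_size V E Vp Ep X) else 0))"
      using AV BG by (intro sum.cong refl) (auto intro!: sum.cong)
    have 3: "(\<Sum>X\<in>B. ?g (Grp X))
      = (\<Sum>X\<in>B. \<Sum>w\<in>V - A. if w \<in> X then real (group_size V E Vp Ep X) * (real (card Vp) - 1) else 0)"
      using BG by (intro sum.cong refl) (auto intro!: sum.cong)
    show ?thesis unfolding S D 1 2 3 ..
  qed
  also have "\<dots> = (\<Sum>v\<in>V - A. real (pdeg V E Vp Ep v))
     + real (card A) * (real (card Vp) * rho_star V E Vp Ep)
     + (\<Sum>v\<in>A. \<Sum>X\<in>?G - B. if v \<in> X then real (group_size V E Vp Ep X) else 0)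
     + (\<Sum>X\<in>B. \<Sum>w\<in>V - A. if w \<in> X then real (group_size V E Vp Ep X) * (real (card Vp) - 1) else 0)"
    by (simp add: sum.distrib)
  finally show ?thesis .
qed


lemma card_filter_real:
  assumes "finite A"
  shows "(\<Sum>x\<in>A. if P x then c else 0) = (c::real) * real (card {x\<in>A. P x})"
proof -
  have "(\<Sum>x\<in>A. if P x then c else 0) = (\<Sum>x\<in>{x\<in>A. P x}. c)"
    using sum.inter_filter[OF assms, of "\<lambda>_. c" P] by simp
  thus ?thesis by (simp add: mult.commute)
qed

definition hB :: "'b set \<Rightarrow> 'a set set \<Rightarrow> 'a set \<Rightarrow> 'a set \<Rightarrow> real" where
  "hB Vp B V1 X = (if X \<in> B then (real (card Vp) - 1) * real (card (X - V1)) else real (card (X \<inter> V1)))"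

lemma cut_eval:
  assumes g: "simple_graph V E" and V1: "V1 \<subseteq> V" and BG: "B \<subseteq> group_sets V E Vp Ep"
    and S: "S = insert Src (Vx ` V1 \<union> Grp ` B)"
  shows "cut_cap V E Vp Ep S =
     (\<Sum>I\<in>instances V E Vp Ep. real (card (fst I - V1)) + hB Vp B V1 (fst I))
     + real (card V1) * (real (card Vp) * rho_star V E Vp Ep)"
proof -
  let ?I = "instances V E Vp Ep"
  let ?G = "group_sets V E Vp Ep"
  let ?gs = "group_size V E Vp Ep"
  let ?k = "real (card Vp)"
  have fV: "finite V" using g by (simp add: simple_graph_def)
  have fI: "finite ?I" using inst_finite[OF g] .
  have fG: "finite ?G" unfolding group_sets_def using fI by simp
  have GV: "X \<in> ?G \<Longrightarrow> X \<subseteq> V" for X unfolding group_sets_def using inst_props by blast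
  have fV1: "finite V1" using fV V1 finite_subset by blast
  have fB: "finite B" using fG BG finite_subset by blast
  have t1: "(\<Sum>v\<in>V - V1. real (pdeg V E Vp Ep v)) = (\<Sum>I\<in>?I. real (card (fst I - V1)))"
  proof -
    have "(\<Sum>v\<in>V - V1. real (pdeg V E Vp Ep v)) = (\<Sum>v\<in>V - V1. \<Sum>I\<in>?I. if v \<in> fst I then 1 else 0)"
      unfolding pdeg_def using card_filter_real[OF fI, of "\<lambda>I. _ \<in> fst I" 1] by simp
    also have "\<dots> = (\<Sum>I\<in>?I. \<Sum>v\<in>V - V1. if v \<in> fst I then 1 else 0)" by (rule sum.swap)
    also have "\<dots> = (\<Sum>I\<in>?I. real (card (fst I - V1)))"
    proof (rule sum.cong[OF refl])
      fix I assume "I \<in> ?I"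
      hence "{v \<in> V - V1. v \<in> fst I} = fst I - V1" using inst_props by blast
      thus "(\<Sum>v\<in>V - V1. if v \<in> fst I then 1 else 0) = real (card (fst I - V1))"
        using card_filter_real[of "V - V1" "\<lambda>v. v \<in> fst I" 1] fV by simp
    qed
    finally show ?thesis .
  qed
  have t3: "(\<Sum>v\<in>V1. \<Sum>X\<in>?G - B. if v \<in> X then real (?gs X) else 0)
        = (\<Sum>X\<in>?G - B. real (?gs X) * real (card (X \<inter> V1)))"
  proof -
    have "(\<Sum>v\<in>V1. \<Sum>X\<in>?G - B. if v \<in> X then real (?gs X) else 0)
       = (\<Sum>X\<in>?G - B. \<Sum>v\<in>V1. if v \<in> X then real (?gs X) else 0)" by (rule sum.swap)
    also have "\<dots> = (\<Sum>X\<in>?G - B. real (?gs X) * real (card (X \<inter> V1)))"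
    proof (rule sum.cong[OF refl])
      fix X
      have "{v \<in> V1. v \<in> X} = X \<inter> V1" by blast
      thus "(\<Sum>v\<in>V1. if v \<in> X then real (?gs X) else 0) = real (?gs X) * real (card (X \<inter> V1))"
        using card_filter_real[OF fV1, of "\<lambda>v. v \<in> X" "real (?gs X)"] by simp
    qed
    finally show ?thesis .
  qed
  have t4: "(\<Sum>X\<in>B. \<Sum>w\<in>V - V1. if w \<in> X then real (?gs X) * (?k - 1) else 0)
      = (\<Sum>X\<in>B. real (?gs X) * ((?k - 1) * real (card (X - V1))))"
  proof (rule sum.cong[OF refl])
    fix X assume "X \<in> B"
    hence "{w \<in> V - V1. w \<in> X} = X - V1" using GV BG by blast
    thus "(\<Sum>w\<in>V - V1. if w \<in> X then real (?gs X) * (?k - 1) else 0) = real (?gs X) * ((?k - 1) * real (card (X - V1)))"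
      using card_filter_real[of "V - V1" "\<lambda>w. w \<in> X" "real (?gs X) * (?k - 1)"] fV by simp
  qed
  have t34: "(\<Sum>X\<in>?G - B. real (?gs X) * real (card (X \<inter> V1)))
       + (\<Sum>X\<in>B. real (?gs X) * ((?k - 1) * real (card (X - V1))))
       = (\<Sum>X\<in>?G. real (?gs X) * hB Vp B V1 X)"
  proof -
    have "(\<Sum>X\<in>?G. real (?gs X) * hB Vp B V1 X) = (\<Sum>X\<in>?G - B. real (?gs X) * hB Vp B V1 X)
       + (\<Sum>X\<in>B. real (?gs X) * hB Vp B V1 X)"
      using sum.subset_diff[OF BG fG] by simp
    also have "(\<Sum>X\<in>?G - B. real (?gs X) * hB Vp B V1 X) = (\<Sum>X\<in>?G - B. real (?gs X) * real (card (X \<inter> V1)))"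
      by (rule sum.cong) (auto simp: hB_def)
    also have "(\<Sum>X\<in>B. real (?gs X) * hB Vp B V1 X) = (\<Sum>X\<in>B. real (?gs X) * ((?k - 1) * real (card (X - V1))))"
      by (rule sum.cong) (auto simp: hB_def)
    finally show ?thesis by simp
  qed
  have grp: "(\<Sum>X\<in>?G. real (?gs X) * hB Vp B V1 X) = (\<Sum>I\<in>?I. hB Vp B V1 (fst I))"
  proof -
    have "(\<Sum>I\<in>?I. hB Vp B V1 (fst I)) = (\<Sum>X\<in>fst ` ?I. \<Sum>I\<in>{I. I \<in> ?I \<and> fst I = X}. hB Vp B V1 (fst I))"
      by (rule sum.image_gen[OF fI])
    also have "\<dots> = (\<Sum>X\<in>?G. real (?gs X) * hB Vp B V1 X)"
      unfolding group_sets_def group_size_def by (rule sum.cong) auto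
    finally show ?thesis by simp
  qed
  have "cut_cap V E Vp Ep S =
     (\<Sum>v\<in>V - V1. real (pdeg V E Vp Ep v))
     + real (card V1) * (?k * rho_star V E Vp Ep)
     + (\<Sum>v\<in>V1. \<Sum>X\<in>?G - B. if v \<in> X then real (?gs X) else 0)
     + (\<Sum>X\<in>B. \<Sum>w\<in>V - V1. if w \<in> X then real (?gs X) * (?k - 1) else 0)"
    by (rule cut_formula[OF fV V1 fG BG S])
  also have "\<dots> = (\<Sum>I\<in>?I. real (card (fst I - V1))) + real (card V1) * (?k * rho_star V E Vp Ep)
     + (\<Sum>I\<in>?I. hB Vp B V1 (fst I))"
    unfolding t1 t3 t4 using t34 grp by simp
  finally show ?thesis by (simp add: sum.distrib)
qed


lemma inst_ineq:
  assumes g: "simple_graph V E" and I: "I \<in> instances V E Vp Ep"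
  shows "real (card (fst I - V1)) + hB Vp B V1 (fst I) \<ge> (if fst I \<subseteq> V1 then 0 else real (card Vp))"
    and "B = {X \<in> group_sets V E Vp Ep. X \<subseteq> V1} \<Longrightarrow>
         real (card (fst I - V1)) + hB Vp B V1 (fst I) = (if fst I \<subseteq> V1 then 0 else real (card Vp))"
proof -
  let ?X = "fst I"
  have XV: "?X \<subseteq> V" and ck: "card ?X = card Vp" using inst_props[OF I] by auto
  have fX: "finite ?X" using g XV finite_subset by (auto simp: simple_graph_def)
  have split: "card ?X = card (?X - V1) + card (?X \<inter> V1)"
    using fX by (metis Diff_Diff_Int card_Diff_subset_Int card_mono finite_Diff inf_le1 le_add_diff_inverse2 card_Diff_subset inf_commute)
  have e0: "?X \<subseteq> V1 \<longleftrightarrow> card (?X - V1) = 0" using fX by auto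
  show "real (card (?X - V1)) + hB Vp B V1 ?X \<ge> (if ?X \<subseteq> V1 then 0 else real (card Vp))"
  proof (cases "?X \<in> B")
    case True
    have "real (card (?X - V1)) + hB Vp B V1 ?X = real (card Vp) * real (card (?X - V1))"
      using True by (simp add: hB_def algebra_simps)
    moreover have "real (card Vp) * real (card (?X - V1)) \<ge> (if ?X \<subseteq> V1 then 0 else real (card Vp))"
    proof (cases "?X \<subseteq> V1")
      case False
      hence "card (?X - V1) \<ge> 1" using e0 by linarith
      hence "real (card Vp) * 1 \<le> real (card Vp) * real (card (?X - V1))"
        by (intro mult_left_mono) auto
      thus ?thesis using False by simp
    qed simp
    ultimately show ?thesis by simp
  next
    case False
    have "real (card (?X - V1)) + hB Vp B V1 ?X = real (card Vp)"
      using False split ck by (simp add: hB_def flip: of_nat_add)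
    thus ?thesis by simp
  qed
  assume B: "B = {X \<in> group_sets V E Vp Ep. X \<subseteq> V1}"
  have XG: "?X \<in> group_sets V E Vp Ep" using I unfolding group_sets_def by simp
  show "real (card (?X - V1)) + hB Vp B V1 ?X = (if ?X \<subseteq> V1 then 0 else real (card Vp))"
  proof (cases "?X \<subseteq> V1")
    case True
    thus ?thesis using B XG e0 by (simp add: hB_def)
  next
    case False
    thus ?thesis using B split ck by (simp add: hB_def flip: of_nat_add)
  qed
qed


theorem lemma10:
  fixes V :: "'a set" and E :: "'a set set" and Vp :: "'b set" and Ep :: "'b set set"
    and V1 :: "'a set"
  assumes "simple_graph V E" and "simple_graph Vp Ep"
    and "V1 \<noteq> {}" and "V1 \<subseteq> V"
  shows "Min {cut_cap V E Vp Ep S | S. adm_cut V E Vp Ep V1 S}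
           = real (card Vp) * (real (mu V E Vp Ep V)
              + (rho_star V E Vp Ep - rho V E Vp Ep V1) * real (card V1))
         \<and> (\<exists>S. adm_cut V E Vp Ep V1 S
              \<and> cut_cap V E Vp Ep S = real (card Vp) * (real (mu V E Vp Ep V)
                   + (rho_star V E Vp Ep - rho V E Vp Ep V1) * real (card V1))
              \<and> {X \<in> group_sets V E Vp Ep. Grp X \<in> S} = {X \<in> group_sets V E Vp Ep. X \<subseteq> V1})"
proof -
  note g = assms(1) and V1 = assms(4)
  let ?I = "instances V E Vp Ep"
  let ?G = "group_sets V E Vp Ep"
  let ?k = "real (card Vp)"
  let ?rs = "rho_star V E Vp Ep"
  let ?val = "real (card Vp) * (real (mu V E Vp Ep V)
              + (rho_star V E Vp Ep - rho V E Vp Ep V1) * real (card V1))"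
  let ?f = "\<lambda>I. if fst I \<subseteq> V1 then 0 else ?k"
  have fV: "finite V" using g by (simp add: simple_graph_def)
  have fI: "finite ?I" using inst_finite[OF g] .
  have fG: "finite ?G" unfolding group_sets_def using fI by simp
  have fV1: "finite V1" using fV V1 finite_subset by blast
  have cV1: "card V1 > 0" using fV1 assms(3) by (simp add: card_gt_0_iff)
  have muV: "mu V E Vp Ep V = card ?I"
  proof -
    have "{I \<in> ?I. fst I \<subseteq> V} = ?I" using inst_props by blast
    thus ?thesis unfolding mu_def by simp
  qed
  have rho1: "rho V E Vp Ep V1 * real (card V1) = real (mu V E Vp Ep V1)"
    unfolding rho_def using cV1 by simp
  have sumf: "(\<Sum>I\<in>?I. ?f I) = ?k * real (card ?I) - ?k * real (mu V E Vp Ep V1)"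
  proof -
    have "(\<Sum>I\<in>?I. ?f I) = (\<Sum>I\<in>?I. ?k - (if fst I \<subseteq> V1 then ?k else 0))"
      by (rule sum.cong) auto
    also have "\<dots> = ?k * real (card ?I) - ?k * real (mu V E Vp Ep V1)"
      unfolding sum_subtractf mu_def using card_filter_real[OF fI, of "\<lambda>I. fst I \<subseteq> V1" ?k]
      by simp
    finally show ?thesis .
  qed
  have val: "?val = (\<Sum>I\<in>?I. ?f I) + real (card V1) * (?k * ?rs)"
    unfolding sumf muV using rho1 by (simp add: algebra_simps)
  have adm_form: "S = insert Src (Vx ` V1 \<union> Grp ` {X \<in> ?G. Grp X \<in> S})" if "adm_cut V E Vp Ep V1 S" for S
  proof
    show "S \<subseteq> insert Src (Vx ` V1 \<union> Grp ` {X \<in> ?G. Grp X \<in> S})"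
    proof
      fix x assume x: "x \<in> S"
      hence "x \<in> hnodes V E Vp Ep" using that by (auto simp: adm_cut_def)
      thus "x \<in> insert Src (Vx ` V1 \<union> Grp ` {X \<in> ?G. Grp X \<in> S})"
        using x that unfolding hnodes_def adm_cut_def by auto
    qed
    show "insert Src (Vx ` V1 \<union> Grp ` {X \<in> ?G. Grp X \<in> S}) \<subseteq> S"
      using that unfolding adm_cut_def by auto
  qed
  have lower: "cut_cap V E Vp Ep S \<ge> ?val" if "adm_cut V E Vp Ep V1 S" for S
  proof -
    let ?B = "{X \<in> ?G. Grp X \<in> S}"
    have "cut_cap V E Vp Ep S = (\<Sum>I\<in>?I. real (card (fst I - V1)) + hB Vp ?B V1 (fst I))
        + real (card V1) * (?k * ?rs)"
      by (rule cut_eval[OF g V1 _ adm_form[OF that]]) auto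
    moreover have "(\<Sum>I\<in>?I. real (card (fst I - V1)) + hB Vp ?B V1 (fst I)) \<ge> (\<Sum>I\<in>?I. ?f I)"
      by (rule sum_mono) (rule inst_ineq(1)[OF g])
    ultimately show ?thesis using val by simp
  qed
  define B0 where "B0 = {X \<in> ?G. X \<subseteq> V1}"
  define S0 where "S0 = insert Src (Vx ` V1 \<union> Grp ` B0)"
  have adm0: "adm_cut V E Vp Ep V1 S0"
    unfolding adm_cut_def S0_def B0_def hnodes_def using V1 by auto
  have cut0: "cut_cap V E Vp Ep S0 = ?val"
  proof -
    have "cut_cap V E Vp Ep S0 = (\<Sum>I\<in>?I. real (card (fst I - V1)) + hB Vp B0 V1 (fst I))
        + real (card V1) * (?k * ?rs)"
      by (rule cut_eval[OF g V1 _ S0_def]) (auto simp: B0_def)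
    also have "(\<Sum>I\<in>?I. real (card (fst I - V1)) + hB Vp B0 V1 (fst I)) = (\<Sum>I\<in>?I. ?f I)"
      by (rule sum.cong[OF refl]) (rule inst_ineq(2)[OF g _ B0_def])
    finally show ?thesis using val by simp
  qed
  have grp0: "{X \<in> ?G. Grp X \<in> S0} = {X \<in> ?G. X \<subseteq> V1}"
    unfolding S0_def B0_def by auto
  have finM: "finite {cut_cap V E Vp Ep S | S. adm_cut V E Vp Ep V1 S}"
  proof -
    have fH: "finite (hnodes V E Vp Ep)" unfolding hnodes_def using fV fG by simp
    have "{cut_cap V E Vp Ep S | S. adm_cut V E Vp Ep V1 S} \<subseteq> cut_cap V E Vp Ep ` Pow (hnodes V E Vp Ep)"
      unfolding adm_cut_def by auto
    thus ?thesis using fH finite_subset by blast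
  qed
  have "Min {cut_cap V E Vp Ep S | S. adm_cut V E Vp Ep V1 S} = ?val"
  proof (rule Min_eqI[OF finM])
    show "\<And>y. y \<in> {cut_cap V E Vp Ep S | S. adm_cut V E Vp Ep V1 S} \<Longrightarrow> ?val \<le> y"
      using lower by blast
    show "?val \<in> {cut_cap V E Vp Ep S | S. adm_cut V E Vp Ep V1 S}"
      using adm0 cut0 by (metis (mono_tags, lifting) mem_Collect_eq)
  qed
  thus ?thesis using adm0 cut0 grp0 by blast
qed

end
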